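(* Let $C_1$ and $C_2$ be subsets of a topological real vector space such that $\mathrm{ri}(C_1)\subseteq C_2\subseteq\mathrm{rc}(C_1)$. If $C_1$ is strictly convex, then $C_2$ is strictly convex.
   Context: Topological real vector spaces are not assumed Hausdorff. For a subset $S$, $\mathrm{Aff}(S)$ is its affine hull; $\mathrm{ri}(S)$, $\mathrm{rc}(S)$ are the interior and closure of $S$ in the subspace topology of $\mathrm{Aff}(S)$. $]x,y[=\{(1-t)x+ty: t\in[0,1]\}\setminus\{x,y\}$. A set $C$ is strictly convex if for any two distinct $x,y\in\mathrm{rc}(C)$, $]x,y[\subseteq\mathrm{ri}(C)$. *)

theory Defs
  imports "HOL-Analysis.Analysis"
begin

text \<open>Topological real vector space (not necessarily Hausdorff): a real vector space
  carrying a topology in which addition, negation and scalar multiplication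
  (jointly, as a map on the product space, spelled out via product neighbourhoods) are continuous.\<close>
class topological_real_vector = real_vector + topological_ab_group_add +
  assumes continuous_scaleR_joint:
    "\<And>U (c::real) (x::'a). open U \<Longrightarrow> c *\<^sub>R x \<in> U \<Longrightarrow>
       \<exists>A B. open A \<and> c \<in> A \<and> open B \<and> x \<in> B \<and> (\<forall>d\<in>A. \<forall>y\<in>B. d *\<^sub>R y \<in> U)"

definition rel_closure :: "'a::topological_real_vector set \<Rightarrow> 'a set" where
  "rel_closure S = (top_of_set (affine hull S)) closure_of S"

definition strictly_convex :: "'a::topological_real_vector set \<Rightarrow> bool" where
  "strictly_convex C \<longleftrightarrow>
     (\<forall>x \<in> rel_closure C. \<forall>y \<in> rel_closure C. x \<noteq> y \<longrightarrow> open_segment x y \<subseteq> rel_interior C)"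

end

theory Submission
  imports Defs
begin

lemma aff_seg:
  fixes a b :: "'a::real_vector"
  assumes "a \<noteq> b" "open_segment a b \<subseteq> S"
  shows "a \<in> affine hull S"
proof -
  define m where "m = (1 - 1/2) *\<^sub>R a + (1/2::real) *\<^sub>R b"
  define q where "q = (1 - 1/4) *\<^sub>R a + (1/4::real) *\<^sub>R b"
  have "m \<in> open_segment a b" unfolding m_def in_segment
    by (rule conjI, rule assms(1), rule exI[of _ "1/2"], simp)
  hence "m \<in> S" by (meson assms(2) subsetD)
  hence m: "m \<in> affine hull S" by (rule hull_inc)
  have "q \<in> open_segment a b" unfolding q_def in_segment
    by (rule conjI, rule assms(1), rule exI[of _ "1/4"], simp)
  hence "q \<in> S" by (meson assms(2) subsetD)
  hence q: "q \<in> affine hull S" by (rule hull_inc)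
  have "(2::real) *\<^sub>R q + (-1::real) *\<^sub>R m \<in> affine hull S"
    by (rule mem_affine[OF affine_affine_hull q m]) simp
  moreover have "(2::real) *\<^sub>R q + (-1::real) *\<^sub>R m = a"
  proof -
    have e: "(3 / 2) *\<^sub>R a = a + (1 / 2) *\<^sub>R a"
    proof -
      have "(3 / 2) *\<^sub>R a = (1 + 1/2) *\<^sub>R a" by simp
      also have "\<dots> = a + (1 / 2) *\<^sub>R a" by (simp only: scaleR_add_left scaleR_one)
      finally show ?thesis .
    qed
    show ?thesis unfolding q_def m_def by (simp add: algebra_simps e)
  qed
  ultimately show ?thesis by simp
qed
theorem mainTheorem13:
  fixes C1 C2 :: "'a::topological_real_vector set"
  assumes "rel_interior C1 \<subseteq> C2"
    and "C2 \<subseteq> rel_closure C1"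
    and "strictly_convex C1"
  shows "strictly_convex C2"
proof -
  have C1rc: "C1 \<subseteq> rel_closure C1"
    unfolding rel_closure_def by (rule closure_of_subset) (simp add: hull_subset)
  have rcA: "rel_closure C1 \<subseteq> affine hull C1"
    unfolding rel_closure_def using closure_of_subset_topspace by fastforce
  have sub1: "affine hull C2 \<subseteq> affine hull C1"
    using assms(2) rcA by (meson affine_affine_hull hull_minimal order_trans)
  have eq: "affine hull C1 = affine hull C2"
  proof (cases "\<exists>x\<in>C1. \<exists>y\<in>C1. x \<noteq> y")
    case True
    then obtain x y where xy: "x \<in> C1" "y \<in> C1" "x \<noteq> y" by blast
    have "C1 \<subseteq> affine hull C2"
    proof
      fix c assume c: "c \<in> C1"
      obtain d where d: "d \<in> C1" "d \<noteq> c" using xy by metis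
      have "open_segment c d \<subseteq> rel_interior C1"
      proof -
        have sc: "\<forall>x \<in> rel_closure C1. \<forall>y \<in> rel_closure C1. x \<noteq> y \<longrightarrow> open_segment x y \<subseteq> rel_interior C1"
          using assms(3) unfolding strictly_convex_def .
        have c1: "c \<in> rel_closure C1" using C1rc c by blast
        have d1: "d \<in> rel_closure C1" using C1rc d(1) by blast
        have "c \<noteq> d" using d(2) by simp
        thus ?thesis using sc c1 d1 by blast
      qed
      hence "open_segment c d \<subseteq> C2" using assms(1) by blast
      thus "c \<in> affine hull C2" using aff_seg d by metis
    qed
    hence "affine hull C1 \<subseteq> affine hull C2"
      by (meson affine_affine_hull hull_minimal)
    thus ?thesis using sub1 by blast
  next
    case False
    show ?thesis
    proof (cases "C1 = {}")
      case True
      then have "C2 = {}" using assms(2) rcA by auto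
      thus ?thesis using True by simp
    next
      case F2: False
      then obtain c where "C1 = {c}" using False by blast
      moreover have "rel_interior {c} = {c}"
      proof -
        have h: "affine hull {c} = {c}" by (metis affine_hull_eq affine_sing)
        show ?thesis unfolding rel_interior_def h
          using openin_topspace[of "top_of_set {c}"] by auto
      qed
      moreover have hc: "affine hull {c} = {c}" by (metis affine_hull_eq affine_sing)
      ultimately have s1: "c \<in> C2" using assms(1) by auto
      have "C2 \<subseteq> {c}" using assms(2) rcA hc \<open>C1 = {c}\<close> by blast
      hence "C2 = {c}" using s1 by blast
      thus ?thesis using \<open>C1 = {c}\<close> by simp
    qed
  qed
  have rcsub: "rel_closure C2 \<subseteq> rel_closure C1"
    unfolding rel_closure_def eq[symmetric]
    using closure_of_mono[OF assms(2)[unfolded rel_closure_def], of "top_of_set (affine hull C1)"]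
    by (simp only: closure_of_closure_of)
  have risub: "rel_interior C1 \<subseteq> rel_interior C2"
    by (rule rel_interior_maximal[OF assms(1)]) (metis eq openin_rel_interior)
  show ?thesis
    using assms(3) rcsub risub unfolding strictly_convex_def by blast
qed

end
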